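(* Let $p$ be a random partition and let $\mathrm{Sh}^p$ be its $p$-Shapley value, $$\mathrm{Sh}^p_i(w)=\sum_{(T,\tau)\in\mathcal{E}(N\setminus\{i\})}\Big(p_N(\{T\cup\{i\}\}\cup\tau)\,w(T\cup\{i\},\tau)-\frac{t}{n-t}\sum_{B\in\tau\cup\{\emptyset\}}p_N(\{T\}\cup\tau_{+i\leadsto B})\,w(T,\tau_{+i\leadsto B})\Big)$$ for $N\subseteq\mathbf{U}$, $w\in\mathbb{W}(N)$, $i\in N$. Then $\mathrm{Sh}^p$ satisfies the null player property if and only if $p=p^\star$, i.e., if and only if $\mathrm{Sh}^p=\mathrm{MPW}$.
   Context: $\mathbf{U}$ is a finite set of players; cardinalities of $N,S,T,B$ are $n,s,t,b$. $\Pi(N)$ is the set of partitions of $N$ ($\Pi(\emptyset)=\{\emptyset\}$). A random partition is $p=(p_N)_{N\subseteq\mathbf{U}}$ with $p_N$ a probability distribution on $\Pi(N)$; $p^\star$ is the Ewens distribution $p^\star_N(\pi)=\frac{\prod_{B\in\pi}(b-1)!}{n!}$. $\pi_{+i\leadsto B}=(\pi\setminus\{B\})\cup\{B\cup\{i\}\}$ for $B\in\pi$, $\pi_{+i\leadsto\emptyset}=\pi\cup\{\{i\}\}$. Embedded coalitions $\mathcal{E}(N)=\{(S,\pi):S\subseteq N,\pi\in\Pi(N\setminus S)\}$; a TUX game on $N$ is $w:\mathcal{E}(N)\to\mathbb{R}$ with $w(\emptyset,\pi)=0$; $\mathbb{W}(N)$ their set. Player $i$ is a null player in $w\in\mathbb{W}(N)$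 if $w(S\cup\{i\},\pi)=w(S,\pi_{+i\leadsto B})$ for all $(S,\pi)\in\mathcal{E}(N\setminus\{i\})$ and $B\in\pi\cup\{\emptyset\}$. A solution $\varphi$ (assigning $\varphi(w)\in\mathbb{R}^N$ to every $w\in\mathbb{W}(N)$, $N\subseteq\mathbf{U}$) satisfies the null player property if $\varphi_i(w)=0$ whenever $i$ is a null player in $w$. The Shapley value of a TU game $v$ is $\mathrm{Sh}_i(v)=\sum_{S\subseteq N\setminus\{i\}}\frac{s!(n-s-1)!}{n!}(v(S\cup\{i\})-v(S))$; the MPW solution is $\mathrm{MPW}(w)=\mathrm{Sh}(\bar v^\star_w)$ with $\bar v^\star_w(S)=\sum_{\pi\in\Pi(N\setminus S)}p^\star_{N\setminus S}(\pi)w(S,\pi)$. *)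

theory Defs
  imports Complex_Main "HOL-Library.Disjoint_Sets"
begin

definition partitions :: "'a set \<Rightarrow> 'a set set set" where
  "partitions N = {P. partition_on N P}"

definition random_partition :: "'a set \<Rightarrow> ('a set \<Rightarrow> 'a set set \<Rightarrow> real) \<Rightarrow> bool" where
  "random_partition U p \<longleftrightarrow>
     (\<forall>N. N \<subseteq> U \<longrightarrow> (\<forall>\<pi>\<in>partitions N. 0 \<le> p N \<pi>) \<and> (\<Sum>\<pi>\<in>partitions N. p N \<pi>) = 1)"

definition ewens :: "'a set \<Rightarrow> 'a set set \<Rightarrow> real" where
  "ewens N \<pi> = (\<Prod>B\<in>\<pi>. fact (card B - 1)) / fact (card N)"

text \<open>pi_{+i ~> B}; B = {} means i forms a new singleton block.\<close>
definition add_to :: "'a set set \<Rightarrow> 'a \<Rightarrow> 'a set \<Rightarrow> 'a set set" where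
  "add_to \<pi> i B = (if B = {} then insert {i} \<pi> else insert (B \<union> {i}) (\<pi> - {B}))"

definition embedded :: "'a set \<Rightarrow> ('a set \<times> 'a set set) set" where
  "embedded N = {(S, \<pi>). S \<subseteq> N \<and> partition_on (N - S) \<pi>}"

text \<open>TUX games on N: functions on embedded coalitions (values outside E(N) are
  irrelevant) with w(empty, pi) = 0.\<close>
definition tux_game :: "'a set \<Rightarrow> ('a set \<Rightarrow> 'a set set \<Rightarrow> real) \<Rightarrow> bool" where
  "tux_game N w \<longleftrightarrow> (\<forall>\<pi>. partition_on N \<pi> \<longrightarrow> w {} \<pi> = 0)"

definition null_player :: "'a set \<Rightarrow> ('a set \<Rightarrow> 'a set set \<Rightarrow> real) \<Rightarrow> 'a \<Rightarrow> bool" where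
  "null_player N w i \<longleftrightarrow>
     (\<forall>(S, \<pi>)\<in>embedded (N - {i}). \<forall>B\<in>insert {} \<pi>. w (S \<union> {i}) \<pi> = w S (add_to \<pi> i B))"

definition null_player_property ::
  "'a set \<Rightarrow> ('a set \<Rightarrow> ('a set \<Rightarrow> 'a set set \<Rightarrow> real) \<Rightarrow> 'a \<Rightarrow> real) \<Rightarrow> bool" where
  "null_player_property U \<phi> \<longleftrightarrow>
     (\<forall>N w i. N \<subseteq> U \<and> tux_game N w \<and> i \<in> N \<and> null_player N w i \<longrightarrow> \<phi> N w i = 0)"

definition p_shapley ::
  "('a set \<Rightarrow> 'a set set \<Rightarrow> real) \<Rightarrow> 'a set \<Rightarrow> ('a set \<Rightarrow> 'a set set \<Rightarrow> real) \<Rightarrow> 'a \<Rightarrow> real" where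
  "p_shapley p N w i =
     (\<Sum>(T, \<tau>)\<in>embedded (N - {i}).
        p N (insert (T \<union> {i}) \<tau>) * w (T \<union> {i}) \<tau>
        - real (card T) / real (card N - card T) *
          (\<Sum>B\<in>insert {} \<tau>. p N (insert T (add_to \<tau> i B)) * w T (add_to \<tau> i B)))"

definition shapley :: "'a set \<Rightarrow> ('a set \<Rightarrow> real) \<Rightarrow> 'a \<Rightarrow> real" where
  "shapley N v i =
     (\<Sum>S\<in>Pow (N - {i}). fact (card S) * fact (card N - card S - 1) / fact (card N)
        * (v (S \<union> {i}) - v S))"

definition mpw :: "'a set \<Rightarrow> ('a set \<Rightarrow> 'a set set \<Rightarrow> real) \<Rightarrow> 'a \<Rightarrow> real" where
  "mpw N w i = shapley N (\<lambda>S. \<Sum>\<pi>\<in>partitions (N - S). ewens (N - S) \<pi> * w S \<pi>) i"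

end

theory Submission
  imports Defs
begin


definition rmv :: "'a \<Rightarrow> 'a set set \<Rightarrow> 'a set set" where
  "rmv i \<sigma> = (\<lambda>A. A - {i}) ` \<sigma> - {{}}"

lemma add_to_partition:
  assumes "partition_on X \<pi>" "i \<notin> X" "B \<in> insert {} \<pi>"
  shows "partition_on (insert i X) (add_to \<pi> i B)"
proof (cases "B = {}")
  case True
  have d: "disjnt {i} (\<Union>\<pi>)" using assms partition_onD1 by (fastforce simp: disjnt_def)
  have "insert i X - {i} = X" using assms by auto
  then show ?thesis using True assms partition_on_insert[OF d] by (auto simp: add_to_def)
next
  case False
  then have B: "B \<in> \<pi>" using assms by auto
  have d1: "disjnt B (\<Union>(\<pi> - {B}))" using assms(1) B
    by (auto simp: partition_on_def disjoint_def disjnt_def)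
  have e: "insert B (\<pi> - {B}) = \<pi>" using B by auto
  have p1: "partition_on (X - B) (\<pi> - {B})"
    using partition_on_insert[OF d1, of X] e assms(1) by simp
  have d2: "disjnt (B \<union> {i}) (\<Union>(\<pi> - {B}))" using d1 assms partition_onD1 by (fastforce simp: disjnt_def)
  have "insert i X - (B \<union> {i}) = X - B" using assms by auto
  moreover have "B \<union> {i} \<subseteq> insert i X" using B assms partition_onD1 by fastforce
  ultimately show ?thesis using False p1 partition_on_insert[OF d2, of "insert i X"] by (simp add: add_to_def)
qed

lemma rmv_id:
  assumes "partition_on X \<pi>" "i \<notin> X"
  shows "rmv i \<pi> = \<pi>"
proof -
  have "\<And>A. A \<in> \<pi> \<Longrightarrow> A - {i} = A" using assms partition_onD1 by fastforce
  then show ?thesis using partition_onD3[OF assms(1)] unfolding rmv_def by (auto simp: image_iff)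
qed

lemma rmv_add_to:
  assumes "partition_on X \<pi>" "i \<notin> X" "B \<in> insert {} \<pi>"
  shows "rmv i (add_to \<pi> i B) = \<pi>"
proof -
  have A: "\<And>A. A \<in> \<pi> \<Longrightarrow> A - {i} = A" using assms partition_onD1 by fastforce
  have ne: "{} \<notin> \<pi>" using partition_onD3[OF assms(1)] .
  show ?thesis
  proof (cases "B = {}")
    case True
    then show ?thesis using A ne unfolding rmv_def add_to_def by (auto simp: image_iff)
  next
    case False
    then have B: "B \<in> \<pi>" "B - {i} = B" using assms A by auto
    show ?thesis using False A ne B unfolding rmv_def add_to_def by (auto simp: image_iff)
  qed
qed



lemma add_to_block_i:
  assumes "partition_on X \<pi>" "i \<notin> X" "B \<in> insert {} \<pi>" "C \<in> add_to \<pi> i B" "i \<in> C"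
  shows "C = B \<union> {i}"
  using assms partition_onD1[OF assms(1)] unfolding add_to_def by (auto split: if_splits)

lemma add_to_in:
  assumes "B \<in> insert {} \<pi>"
  shows "B \<union> {i} \<in> add_to \<pi> i B"
  using assms unfolding add_to_def by auto

lemma add_to_inj_B:
  assumes "partition_on X \<pi>" "i \<notin> X" "B \<in> insert {} \<pi>" "B' \<in> insert {} \<pi>"
    and "add_to \<pi> i B = add_to \<pi> i B'"
  shows "B = B'"
proof -
  have "B \<union> {i} = B' \<union> {i}"
    using add_to_block_i[OF assms(1,2,4), of "B \<union> {i}"] add_to_in[OF assms(3), of i] assms(5) by auto
  moreover have "i \<notin> B" "i \<notin> B'" using assms partition_onD1[OF assms(1)] by auto
  ultimately show ?thesis by blast
qed

lemma add_to_surj: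
  assumes "partition_on (insert i X) \<sigma>" "i \<notin> X"
  shows "\<exists>\<pi> B. partition_on X \<pi> \<and> B \<in> insert {} \<pi> \<and> \<sigma> = add_to \<pi> i B"
proof -
  obtain A where A: "A \<in> \<sigma>" "i \<in> A" using partition_onD1[OF assms(1)] by auto
  have dA: "disjnt A (\<Union>(\<sigma> - {A}))" using assms(1) A
    by (auto simp: partition_on_def disjoint_def disjnt_def)
  have eA: "insert A (\<sigma> - {A}) = \<sigma>" using A by auto
  have p1: "partition_on (insert i X - A) (\<sigma> - {A})" and Asub: "A \<subseteq> insert i X"
    using partition_on_insert[OF dA, of "insert i X"] eA assms(1) by auto
  show ?thesis
  proof (cases "A = {i}")
    case True
    have "insert i X - A = X" using True assms by auto
    then have "partition_on X (\<sigma> - {A})" using p1 by simp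
    moreover have "\<sigma> = add_to (\<sigma> - {A}) i {}" using True eA by (simp add: add_to_def)
    ultimately show ?thesis by blast
  next
    case False
    define B where "B = A - {i}"
    have Bne: "B \<noteq> {}" using False A B_def by auto
    have BX: "B \<subseteq> X" using Asub B_def by auto
    have dB: "disjnt B (\<Union>(\<sigma> - {A}))" using dA B_def by (auto simp: disjnt_def)
    have "insert i X - A = X - B" using A assms B_def by auto
    then have "partition_on X (insert B (\<sigma> - {A}))"
      using partition_on_insert[OF dB, of X] p1 Bne BX by simp
    moreover have "B \<notin> \<sigma> - {A}"
    proof
      assume "B \<in> \<sigma> - {A}"
      then have "B \<inter> A = {}" using assms(1) A by (auto simp: partition_on_def disjoint_def)
      then show False using Bne B_def by auto
    qed
    then have "\<sigma> = add_to (insert B (\<sigma> - {A})) i B"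
      using Bne eA A B_def by (auto simp: add_to_def insert_absorb)
    ultimately show ?thesis by blast
  qed
qed

lemma add_to_bij:
  assumes "i \<notin> X"
  shows "bij_betw (\<lambda>(\<pi>, B). add_to \<pi> i B) (SIGMA \<pi>:partitions X. insert {} \<pi>) (partitions (insert i X))"
proof (rule bij_betwI')
  fix x y assume x: "x \<in> (SIGMA \<pi>:partitions X. insert {} \<pi>)" and y: "y \<in> (SIGMA \<pi>:partitions X. insert {} \<pi>)"
  obtain \<pi> B where xx: "x = (\<pi>, B)" "partition_on X \<pi>" "B \<in> insert {} \<pi>" using x by (auto simp: partitions_def)
  obtain \<pi>' B' where yy: "y = (\<pi>', B')" "partition_on X \<pi>'" "B' \<in> insert {} \<pi>'" using y by (auto simp: partitions_def)
  show "((case x of (\<pi>, B) \<Rightarrow> add_to \<pi> i B) = (case y of (\<pi>, B) \<Rightarrow> add_to \<pi> i B)) = (x = y)"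
  proof
    assume h: "(case x of (\<pi>, B) \<Rightarrow> add_to \<pi> i B) = (case y of (\<pi>, B) \<Rightarrow> add_to \<pi> i B)"
    then have "rmv i (add_to \<pi> i B) = rmv i (add_to \<pi>' i B')" using xx yy by simp
    then have "\<pi> = \<pi>'" using rmv_add_to[OF xx(2) assms xx(3)] rmv_add_to[OF yy(2) assms yy(3)] by simp
    moreover have "add_to \<pi> i B = add_to \<pi>' i B'" using h xx(1) yy(1) by simp
    ultimately have "B = B'" using add_to_inj_B[OF xx(2) assms xx(3), of B'] yy(3) by simp
    then show "x = y" using \<open>\<pi> = \<pi>'\<close> xx(1) yy(1) by simp
  qed simp
next
  fix x assume "x \<in> (SIGMA \<pi>:partitions X. insert {} \<pi>)"
  then show "(case x of (\<pi>, B) \<Rightarrow> add_to \<pi> i B) \<in> partitions (insert i X)"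
    using add_to_partition[OF _ assms] by (auto simp: partitions_def)
next
  fix y assume "y \<in> partitions (insert i X)"
  then obtain \<pi> B where "partition_on X \<pi> \<and> B \<in> insert {} \<pi> \<and> y = add_to \<pi> i B"
    using add_to_surj assms by (metis mem_Collect_eq partitions_def)
  then show "\<exists>x\<in>(SIGMA \<pi>:partitions X. insert {} \<pi>). y = (case x of (\<pi>, B) \<Rightarrow> add_to \<pi> i B)"
    by (auto simp: partitions_def)
qed



definition W :: "'a set set \<Rightarrow> real" where
  "W \<pi> = (\<Prod>B\<in>\<pi>. fact (card B - 1))"

lemma ewens_W: "ewens N \<pi> = W \<pi> / fact (card N)"
  by (simp add: ewens_def W_def)

lemma W_pos: "W \<pi> > 0"
  unfolding W_def by (rule prod_pos) auto

lemma partition_finite_blocks: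
  assumes "partition_on X \<pi>" "finite X" "B \<in> \<pi>" shows "finite B"
  using assms partition_onD1[OF assms(1)] by (metis Union_upper finite_subset)

lemma partition_card_sum:
  assumes "partition_on X \<pi>" "finite X" shows "(\<Sum>B\<in>\<pi>. card B) = card X"
proof -
  have "card (\<Union>\<pi>) = (\<Sum>B\<in>\<pi>. card B)"
    by (rule card_Union_disjoint) (use assms partition_onD2 partition_finite_blocks in auto)
  then show ?thesis using partition_onD1[OF assms(1)] by simp
qed

lemma W_add_to_empty:
  assumes "partition_on X \<pi>" "finite X" "i \<notin> X"
  shows "W (add_to \<pi> i {}) = W \<pi>"
proof -
  have "{i} \<notin> \<pi>" using assms partition_onD1[OF assms(1)] by auto
  moreover have "finite \<pi>" using finite_elements assms by blast
  ultimately show ?thesis by (simp add: add_to_def W_def)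
qed

lemma W_add_to_block:
  assumes "partition_on X \<pi>" "finite X" "i \<notin> X" "B \<in> \<pi>"
  shows "W (add_to \<pi> i B) = W \<pi> * card B"
proof -
  have fin: "finite \<pi>" using finite_elements assms by blast
  have Bne: "B \<noteq> {}" using assms partition_onD3 by blast
  have fB: "finite B" using partition_finite_blocks assms by blast
  have iB: "i \<notin> B" using assms partition_onD1[OF assms(1)] by auto
  have n1: "B \<union> {i} \<notin> \<pi> - {B}" using assms partition_onD1[OF assms(1)] by auto
  have c: "card (B \<union> {i}) - 1 = card B" using fB iB by simp
  have "W (add_to \<pi> i B) = fact (card B) * W (\<pi> - {B})"
    using Bne n1 fin c by (simp add: add_to_def W_def)
  moreover have "W \<pi> = fact (card B - 1) * W (\<pi> - {B})"
    unfolding W_def using fin assms(4) by (simp add: prod.remove)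
  moreover have "card B > 0" using Bne fB by (simp add: card_gt_0_iff)
  ultimately show ?thesis using fact_reduce[of "card B", where 'a=real] by (simp add: algebra_simps)
qed

lemma W_add_to_sum:
  assumes "partition_on X \<pi>" "finite X" "i \<notin> X"
  shows "(\<Sum>B\<in>insert {} \<pi>. W (add_to \<pi> i B)) = W \<pi> * (1 + card X)"
proof -
  have fin: "finite \<pi>" using finite_elements assms by blast
  have ne: "{} \<notin> \<pi>" using partition_onD3[OF assms(1)] .
  have "(\<Sum>B\<in>insert {} \<pi>. W (add_to \<pi> i B)) = W \<pi> + (\<Sum>B\<in>\<pi>. W \<pi> * card B)"
    using fin ne W_add_to_empty[OF assms] W_add_to_block[OF assms] by simp
  also have "\<dots> = W \<pi> * (1 + (\<Sum>B\<in>\<pi>. card B))"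
    by (simp add: sum_distrib_left[symmetric] algebra_simps)
  finally show ?thesis using partition_card_sum[OF assms(1,2)] by simp
qed

lemma finite_partitions: "finite X \<Longrightarrow> finite (partitions X)"
  unfolding partitions_def by (rule finitely_many_partition_on)

lemma sum_W:
  assumes "finite N" shows "(\<Sum>\<sigma>\<in>partitions N. W \<sigma>) = fact (card N)"
  using assms
proof (induction N rule: finite_induct)
  case empty
  have "partitions ({}::'a set) = {{}}" by (auto simp: partitions_def partition_on_empty)
  then show ?case by (simp add: W_def)
next
  case (insert x F)
  have "(\<Sum>\<sigma>\<in>partitions (insert x F). W \<sigma>)
      = (\<Sum>z\<in>(SIGMA \<pi>:partitions F. insert {} \<pi>). W ((\<lambda>(\<pi>, B). add_to \<pi> x B) z))"
    using sum.reindex_bij_betw[OF add_to_bij[OF insert(2)], of W] by simp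
  also have "\<dots> = (\<Sum>\<pi>\<in>partitions F. \<Sum>B\<in>insert {} \<pi>. W (add_to \<pi> x B))"
    by (subst sum.Sigma) (use insert(1) finite_partitions finite_elements in \<open>auto simp: partitions_def split_beta\<close>)
  also have "\<dots> = (\<Sum>\<pi>\<in>partitions F. W \<pi> * (1 + card F))"
    by (rule sum.cong) (use W_add_to_sum insert in \<open>auto simp: partitions_def\<close>)
  also have "\<dots> = (fact (card F) :: real) * (1 + card F)"
    by (simp only: sum_distrib_right[symmetric] insert(3))
  finally show ?case using insert by (simp add: algebra_simps)
qed

lemma sum_ewens:
  assumes "finite N" shows "(\<Sum>\<sigma>\<in>partitions N. ewens N \<sigma>) = 1"
  using sum_W[OF assms] by (simp add: ewens_W sum_divide_distrib[symmetric])

lemma not_in_add_to: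
  assumes "partition_on X \<tau>" "i \<notin> X" "B \<in> insert {} \<tau>" "T \<inter> insert i X = {}" "T \<noteq> {}"
  shows "T \<notin> add_to \<tau> i B"
proof
  assume "T \<in> add_to \<tau> i B"
  then have "T \<subseteq> insert i X" using partition_onD1[OF add_to_partition[OF assms(1-3)]] by auto
  then show False using assms(4,5) by auto
qed

lemma aux_arith: "(c::real) \<noteq> 0 \<Longrightarrow> t * f * w / F = t / c * (f * w * c / F)"
  by (simp add: field_simps)

lemma ewens_rel:
  assumes "finite N" "i \<in> N" "T \<subseteq> N - {i}" "T \<noteq> {}" "partition_on (N - {i} - T) \<tau>"
  shows "ewens N (insert (T \<union> {i}) \<tau>) =
     real (card T) / real (card N - card T) * (\<Sum>B\<in>insert {} \<tau>. ewens N (insert T (add_to \<tau> i B)))"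
proof -
  define X where "X = N - {i} - T"
  have fX: "finite X" using assms X_def by auto
  have iX: "i \<notin> X" using X_def by auto
  have tau: "partition_on X \<tau>" using assms X_def by simp
  have fT: "finite T" using assms finite_subset by blast
  have fin: "finite \<tau>" using finite_elements tau fX by blast
  have n1: "T \<union> {i} \<notin> \<tau>" using partition_onD1[OF tau] iX by auto
  have iT: "i \<notin> T" using assms by auto
  have W1: "W (insert (T \<union> {i}) \<tau>) = fact (card T) * W \<tau>"
    using n1 fin fT iT by (simp add: W_def)
  have W2: "W (insert T (add_to \<tau> i B)) = fact (card T - 1) * W (add_to \<tau> i B)" if "B \<in> insert {} \<tau>" for B
  proof -
    have "T \<notin> add_to \<tau> i B" by (rule not_in_add_to[OF tau iX that]) (use X_def assms in auto)
    moreover have "finite (add_to \<tau> i B)"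
      using finite_elements[OF _ add_to_partition[OF tau iX that]] fX by blast
    ultimately show ?thesis by (simp add: W_def)
  qed
  have S: "(\<Sum>B\<in>insert {} \<tau>. W (insert T (add_to \<tau> i B))) = fact (card T - 1) * W \<tau> * (1 + card X)"
    using W2 W_add_to_sum[OF tau fX iX] by (simp add: sum_distrib_left[symmetric])
  have cN: "card N = card X + card T + 1"
  proof -
    have "N = insert i (X \<union> T)" using assms X_def by auto
    moreover have "X \<inter> T = {}" using X_def by auto
    ultimately show ?thesis using fX fT iX iT by (simp add: card_Un_disjoint)
  qed
  have tpos: "card T > 0" using fT assms(4) by (simp add: card_gt_0_iff)
  have ft: "fact (card T) = (card T :: real) * fact (card T - 1)" using fact_reduce[OF tpos] by simp
  have e1: "(\<Sum>B\<in>insert {} \<tau>. ewens N (insert T (add_to \<tau> i B)))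
      = fact (card T - 1) * W \<tau> * (1 + card X) / fact (card N)"
    using S by (simp add: ewens_W sum_divide_distrib[symmetric])
  have e2: "ewens N (insert (T \<union> {i}) \<tau>) = fact (card T) * W \<tau> / fact (card N)"
    using W1 by (simp add: ewens_W)
  have e3: "real (card N - card T) = real (1 + card X)" using cN by simp
  have "real (1 + card X) \<noteq> 0" by simp
  then show ?thesis unfolding e1 e2 e3 ft by (rule aux_arith)
qed



definition coef :: "('a set \<Rightarrow> 'a set set \<Rightarrow> real) \<Rightarrow> 'a set \<Rightarrow> 'a \<Rightarrow> 'a set \<Rightarrow> 'a set set \<Rightarrow> real" where
  "coef p N i T \<tau> = p N (insert (T \<union> {i}) \<tau>)
     - real (card T) / real (card N - card T) * (\<Sum>B\<in>insert {} \<tau>. p N (insert T (add_to \<tau> i B)))"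

lemma finite_embedded: "finite N \<Longrightarrow> finite (embedded N)"
proof -
  assume f: "finite N"
  have "embedded N \<subseteq> Pow N \<times> Pow (Pow N)"
    unfolding embedded_def using partition_onD1 by fastforce
  then show ?thesis using f by (simp add: finite_subset)
qed

lemma shapley_null:
  assumes "null_player N w i"
  shows "p_shapley p N w i = (\<Sum>(T, \<tau>)\<in>embedded (N - {i}). coef p N i T \<tau> * w (T \<union> {i}) \<tau>)"
  unfolding p_shapley_def
proof (rule sum.cong[OF refl], clarify)
  fix T \<tau> assume h: "(T, \<tau>) \<in> embedded (N - {i})"
  have "(\<Sum>B\<in>insert {} \<tau>. p N (insert T (add_to \<tau> i B)) * w T (add_to \<tau> i B))
      = (\<Sum>B\<in>insert {} \<tau>. p N (insert T (add_to \<tau> i B)) * w (T \<union> {i}) \<tau>)"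
    using assms h unfolding null_player_def by (intro sum.cong) auto
  also have "\<dots> = (\<Sum>B\<in>insert {} \<tau>. p N (insert T (add_to \<tau> i B))) * w (T \<union> {i}) \<tau>"
    by (rule sum_distrib_right[symmetric])
  finally show "p N (insert (T \<union> {i}) \<tau>) * w (T \<union> {i}) \<tau> -
         real (card T) / real (card N - card T) *
         (\<Sum>B\<in>insert {} \<tau>. p N (insert T (add_to \<tau> i B)) * w T (add_to \<tau> i B)) =
         coef p N i T \<tau> * w (T \<union> {i}) \<tau>"
    unfolding coef_def by (simp only: left_diff_distrib mult.assoc)
qed

lemma part_insert_T:
  assumes "T \<subseteq> N" "T \<noteq> {}" "partition_on (N - T) \<sigma>"
  shows "partition_on N (insert T \<sigma>)"
proof -
  have d: "disjnt T (\<Union>\<sigma>)" using partition_onD1[OF assms(3)] by (auto simp: disjnt_def)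
  show ?thesis using partition_on_insert[OF d, of N] assms by simp
qed

lemma part_first:
  assumes "(T, \<tau>) \<in> embedded (N - {i})" "i \<in> N"
  shows "partition_on N (insert (T \<union> {i}) \<tau>)"
  using assms by (intro part_insert_T) (auto simp: embedded_def Diff_insert2[symmetric] Un_commute)

lemma part_second:
  assumes "(T, \<tau>) \<in> embedded (N - {i})" "i \<in> N" "T \<noteq> {}" "B \<in> insert {} \<tau>"
  shows "partition_on N (insert T (add_to \<tau> i B))"
proof -
  have "partition_on (N - {i} - T) \<tau>" "T \<subseteq> N - {i}" using assms(1) by (auto simp: embedded_def)
  moreover have "insert i (N - {i} - T) = N - T" using assms(2) calculation(2) by auto
  ultimately have "partition_on (N - T) (add_to \<tau> i B)"
    using add_to_partition[of "N - {i} - T" \<tau> i B] assms(4) by auto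
  then show ?thesis using assms \<open>T \<subseteq> N - {i}\<close> by (intro part_insert_T) auto
qed

lemma shp_cong:
  assumes "i \<in> N" "\<forall>\<pi>\<in>partitions N. p N \<pi> = q N \<pi>"
  shows "p_shapley p N w i = p_shapley q N w i"
  unfolding p_shapley_def
proof (rule sum.cong[OF refl], clarify)
  fix T \<tau> assume h: "(T, \<tau>) \<in> embedded (N - {i})"
  have 1: "p N (insert (T \<union> {i}) \<tau>) = q N (insert (T \<union> {i}) \<tau>)"
    using assms part_first[OF h assms(1)] by (auto simp: partitions_def)
  have 2: "real (card T) / real (card N - card T) *
         (\<Sum>B\<in>insert {} \<tau>. p N (insert T (add_to \<tau> i B)) * w T (add_to \<tau> i B))
      = real (card T) / real (card N - card T) *
         (\<Sum>B\<in>insert {} \<tau>. q N (insert T (add_to \<tau> i B)) * w T (add_to \<tau> i B))"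
  proof (cases "T = {}")
    case False
    then show ?thesis using assms part_second[OF h assms(1) False]
      by (intro arg_cong[where f="\<lambda>x. _ * x"] sum.cong) (auto simp: partitions_def)
  qed simp
  show "p N (insert (T \<union> {i}) \<tau>) * w (T \<union> {i}) \<tau> -
          real (card T) / real (card N - card T) *
          (\<Sum>B\<in>insert {} \<tau>. p N (insert T (add_to \<tau> i B)) * w T (add_to \<tau> i B)) =
          q N (insert (T \<union> {i}) \<tau>) * w (T \<union> {i}) \<tau> -
          real (card T) / real (card N - card T) *
          (\<Sum>B\<in>insert {} \<tau>. q N (insert T (add_to \<tau> i B)) * w T (add_to \<tau> i B))"
    using 1 2 by simp
qed

lemma npp_ewens:
  assumes "finite U"
  shows "null_player_property U (p_shapley ewens)"
  unfolding null_player_property_def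
proof (intro allI impI, elim conjE)
  fix N w i assume NU: "N \<subseteq> U" and tux: "tux_game N w" and iN: "i \<in> N" and nul: "null_player N w i"
  have fN: "finite N" using NU assms finite_subset by blast
  show "p_shapley ewens N w i = 0"
    unfolding shapley_null[OF nul]
  proof (rule sum.neutral, clarify)
    fix T \<tau> assume h: "(T, \<tau>) \<in> embedded (N - {i})"
    have Tt: "T \<subseteq> N - {i}" "partition_on (N - {i} - T) \<tau>" using h by (auto simp: embedded_def)
    show "coef ewens N i T \<tau> * w (T \<union> {i}) \<tau> = 0"
    proof (cases "T = {}")
      case True
      have "w (T \<union> {i}) \<tau> = w {} (add_to \<tau> i {})"
        using nul h True unfolding null_player_def by auto
      moreover have "partition_on N (add_to \<tau> i {})"
        using add_to_partition[of "N - {i}" \<tau> i "{}"] Tt True iN by (simp add: insert_absorb)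
      ultimately show ?thesis using tux unfolding tux_game_def by simp
    next
      case False
      then show ?thesis unfolding coef_def using ewens_rel[OF fN iN Tt(1) False Tt(2)] by simp
    qed
  qed
qed

lemma npp_coef:
  assumes "null_player_property U (p_shapley p)" "N \<subseteq> U" "finite N" "i \<in> N"
    and h: "(T, \<tau>) \<in> embedded (N - {i})" and Tne: "T \<noteq> {}"
  shows "coef p N i T \<tau> = 0"
proof -
  define w where "w S \<sigma> = (if S - {i} = T \<and> rmv i \<sigma> = \<tau> then 1 else (0::real))" for S \<sigma>
  have tux: "tux_game N w" unfolding tux_game_def w_def using Tne by auto
  have nul: "null_player N w i"
    unfolding null_player_def
  proof (clarify)
    fix S \<pi> B assume Sp: "(S, \<pi>) \<in> embedded (N - {i})" and B: "B \<in> insert {} \<pi>"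
    have S: "S \<subseteq> N - {i}" "partition_on (N - {i} - S) \<pi>" using Sp by (auto simp: embedded_def)
    have 1: "(S \<union> {i}) - {i} = S" "S - {i} = S" using S by auto
    have 2: "rmv i \<pi> = \<pi>" using rmv_id[OF S(2)] by simp
    have 3: "rmv i (add_to \<pi> i B) = \<pi>" using rmv_add_to[OF S(2) _ B] by simp
    show "w (S \<union> {i}) \<pi> = w S (add_to \<pi> i B)" unfolding w_def 1 2 3 ..
  qed
  have "p_shapley p N w i = 0" using assms(1,2,4) tux nul unfolding null_player_property_def by blast
  moreover have "p_shapley p N w i = (\<Sum>x\<in>embedded (N - {i}). if (T, \<tau>) = x then coef p N i T \<tau> else 0)"
    unfolding shapley_null[OF nul]
  proof (rule sum.cong[OF refl], clarify)
    fix T' \<tau>' assume h': "(T', \<tau>') \<in> embedded (N - {i})"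
    have S: "T' \<subseteq> N - {i}" "partition_on (N - {i} - T') \<tau>'" using h' by (auto simp: embedded_def)
    have 1: "(T' \<union> {i}) - {i} = T'" using S by auto
    have 2: "rmv i \<tau>' = \<tau>'" using rmv_id[OF S(2)] by simp
    show "coef p N i T' \<tau>' * w (T' \<union> {i}) \<tau>' = (if (T, \<tau>) = (T', \<tau>') then coef p N i T \<tau> else 0)"
      unfolding w_def 1 2 by auto
  qed
  ultimately show ?thesis using finite_embedded[of "N - {i}"] assms(3) h by simp
qed



definition rel :: "('a set \<Rightarrow> 'a set set \<Rightarrow> real) \<Rightarrow> 'a set \<Rightarrow> bool" where
  "rel p N \<longleftrightarrow> (\<forall>i\<in>N. \<forall>T \<tau>. (T, \<tau>) \<in> embedded (N - {i}) \<longrightarrow> T \<noteq> {} \<longrightarrow> coef p N i T \<tau> = 0)"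

lemma rel_ewens: "finite N \<Longrightarrow> rel ewens N"
  unfolding rel_def coef_def
proof (intro ballI allI impI)
  fix i T \<tau> assume "finite N" "i \<in> N" "(T, \<tau>) \<in> embedded (N - {i})" "T \<noteq> {}"
  then show "ewens N (insert (T \<union> {i}) \<tau>) - real (card T) / real (card N - card T) *
          (\<Sum>B\<in>insert {} \<tau>. ewens N (insert T (add_to \<tau> i B))) = 0"
    using ewens_rel[of N i T \<tau>] by (simp add: embedded_def)
qed

lemma embedded_iff: "(S, \<pi>) \<in> embedded N \<longleftrightarrow> S \<subseteq> N \<and> partition_on (N - S) \<pi>"
  by (simp add: embedded_def)

lemma avg:
  fixes p e :: "'b \<Rightarrow> real"
  assumes "k > 0" "finite S" "j \<in> S" "\<forall>x\<in>S. p x \<le> M * e x"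
    "P = k * sum p S" "E = k * sum e S" "P = M * E"
  shows "p j = M * e j"
proof -
  have "k * sum p S = k * (M * sum e S)" using assms(5-7) by (simp only: mult.left_commute)
  then have s: "sum p S = M * sum e S" using assms(1) by simp
  have "sum (\<lambda>x. M * e x - p x) S = M * sum e S - sum p S"
    by (simp only: sum_subtractf sum_distrib_left)
  then have "sum (\<lambda>x. M * e x - p x) S = 0" using s by simp
  moreover have "\<And>x. x \<in> S \<Longrightarrow> 0 \<le> M * e x - p x" using assms(4) by simp
  ultimately have "\<forall>x\<in>S. M * e x - p x = 0"
    using sum_nonneg_eq_0_iff[OF assms(2), of "\<lambda>x. M * e x - p x"] by blast
  then show ?thesis using assms(3) by auto
qed

lemma partition_card_le:
  assumes "partition_on N \<sigma>" "finite N" shows "card \<sigma> \<le> card N"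
proof -
  have "card \<sigma> = (\<Sum>B\<in>\<sigma>. 1)" by simp
  also have "\<dots> \<le> (\<Sum>B\<in>\<sigma>. card B)"
  proof (rule sum_mono)
    fix B assume "B \<in> \<sigma>"
    then show "1 \<le> card B" using partition_finite_blocks[OF assms(1,2)] partition_onD3[OF assms(1)]
      by (metis One_nat_def Suc_leI card_gt_0_iff)
  qed
  finally show ?thesis using partition_card_sum[OF assms] by simp
qed

lemma non_disc:
  assumes "partition_on N \<sigma>" "finite N" "\<sigma> \<noteq> (\<lambda>x. {x}) ` N"
  shows "\<exists>A\<in>\<sigma>. 2 \<le> card A"
proof (rule ccontr)
  assume na: "\<not> ?thesis"
  have c: "\<forall>A\<in>\<sigma>. card A = 1"
  proof
    fix A assume A: "A \<in> \<sigma>"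
    have "card A > 0" using partition_finite_blocks[OF assms(1,2) A] partition_onD3[OF assms(1)] A
      by (auto simp: card_gt_0_iff)
    moreover have "\<not> 2 \<le> card A" using A na by blast
    ultimately show "card A = 1" by linarith
  qed
  have "\<sigma> = (\<lambda>x. {x}) ` N"
  proof
    show "\<sigma> \<subseteq> (\<lambda>x. {x}) ` N"
    proof
      fix A assume A: "A \<in> \<sigma>"
      then obtain x where "A = {x}" using c card_1_singletonE by blast
      moreover have "A \<subseteq> N" using A partition_onD1[OF assms(1)] by auto
      ultimately show "A \<in> (\<lambda>x. {x}) ` N" by auto
    qed
  next
    show "(\<lambda>x. {x}) ` N \<subseteq> \<sigma>"
    proof
      fix A assume "A \<in> (\<lambda>x. {x}) ` N"
      then obtain x where x: "x \<in> N" "A = {x}" by auto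
      then obtain B where B: "B \<in> \<sigma>" "x \<in> B" using partition_onD1[OF assms(1)] by auto
      then obtain y where "B = {y}" using c card_1_singletonE by blast
      then show "A \<in> \<sigma>" using B x by auto
    qed
  qed
  then show False using assms(3) by simp
qed

lemma reach_disc:
  assumes "finite N" "\<sigma> \<in> partitions N" "P \<sigma>"
    and step: "\<And>\<sigma>. \<sigma> \<in> partitions N \<Longrightarrow> P \<sigma> \<Longrightarrow> \<sigma> \<noteq> (\<lambda>x. {x}) ` N \<Longrightarrow>
        \<exists>\<sigma>'\<in>partitions N. card \<sigma>' = Suc (card \<sigma>) \<and> P \<sigma>'"
  shows "P ((\<lambda>x. {x}) ` N)"
  using assms(2,3)
proof (induction "card N - card \<sigma>" arbitrary: \<sigma> rule: less_induct)
  case less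
  show ?case
  proof (cases "\<sigma> = (\<lambda>x. {x}) ` N")
    case True then show ?thesis using less by simp
  next
    case False
    then obtain \<sigma>' where s: "\<sigma>' \<in> partitions N" "card \<sigma>' = Suc (card \<sigma>)" "P \<sigma>'"
      using step less by blast
    have "card \<sigma>' \<le> card N" using partition_card_le s(1) assms(1) by (auto simp: partitions_def)
    then have "card N - card \<sigma>' < card N - card \<sigma>" using s(2) by simp
    then show ?thesis using less s by blast
  qed
qed

lemma split_step:
  assumes "partition_on N \<sigma>" "finite N" "A \<in> \<sigma>" "i \<in> A" "2 \<le> card A"
  shows "(A - {i}, \<sigma> - {A}) \<in> embedded (N - {i})" "A - {i} \<noteq> {}"
    "insert ((A - {i}) \<union> {i}) (\<sigma> - {A}) = \<sigma>"
    "card (insert (A - {i}) (add_to (\<sigma> - {A}) i {})) = Suc (card \<sigma>)"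
proof -
  have fA: "finite A" using partition_finite_blocks assms by blast
  have AN: "A \<subseteq> N" using assms partition_onD1 by blast
  have dA: "disjnt A (\<Union>(\<sigma> - {A}))" using assms(1,3)
    by (auto simp: partition_on_def disjoint_def disjnt_def)
  have eA: "insert A (\<sigma> - {A}) = \<sigma>" using assms(3) by auto
  have p1: "partition_on (N - A) (\<sigma> - {A})"
    using partition_on_insert[OF dA, of N] eA assms(1) by auto
  moreover have eqq: "N - {i} - (A - {i}) = N - A" using assms by auto
  ultimately have pp: "partition_on (N - {i} - (A - {i})) (\<sigma> - {A})" by (simp only:)
  have "A - {i} \<subseteq> N - {i}" using AN by blast
  then show "(A - {i}, \<sigma> - {A}) \<in> embedded (N - {i})" unfolding embedded_iff using pp by (rule conjI)
  show ne: "A - {i} \<noteq> {}"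
  proof
    assume "A - {i} = {}"
    then have "A \<subseteq> {i}" by blast
    then have "card A \<le> 1" using card_mono[of "{i}" A] by simp
    then show False using assms(5) by simp
  qed
  show "insert ((A - {i}) \<union> {i}) (\<sigma> - {A}) = \<sigma>" using assms(4) eA by (simp add: insert_absorb)
  have fs: "finite \<sigma>" using finite_elements assms by blast
  have n1: "{i} \<notin> \<sigma> - {A}" using dA assms(4) by (auto simp: disjnt_def)
  have n2: "A - {i} \<notin> \<sigma> - {A}" using dA ne by (auto simp: disjnt_def)
  have n3: "A - {i} \<noteq> {i}" by auto
  have "card (insert (A - {i}) (insert {i} (\<sigma> - {A}))) = Suc (Suc (card (\<sigma> - {A})))"
    using n1 n2 n3 fs by simp
  also have "\<dots> = Suc (card \<sigma>)" using fs assms(3) card_Suc_Diff1 by fastforce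
  finally show "card (insert (A - {i}) (add_to (\<sigma> - {A}) i {})) = Suc (card \<sigma>)"
    by (simp add: add_to_def)
qed

lemma maxp:
  assumes fN: "finite N" and rp: "rel p N" and re: "rel ewens N"
  shows "\<forall>\<sigma>\<in>partitions N. p N \<sigma> / ewens N \<sigma> \<le> p N ((\<lambda>x. {x}) ` N) / ewens N ((\<lambda>x. {x}) ` N)"
proof -
  define f where "f \<sigma> = p N \<sigma> / ewens N \<sigma>" for \<sigma>
  have epos: "ewens N \<sigma> > 0" for \<sigma> by (simp add: ewens_W W_pos)
  have disc: "(\<lambda>x. {x}) ` N \<in> partitions N" by (simp add: partitions_def partition_on_singletons)
  have fin: "finite (f ` partitions N)" using finite_partitions[OF fN] by simp
  define M where "M = Max (f ` partitions N)"
  have Mge: "\<forall>\<sigma>\<in>partitions N. f \<sigma> \<le> M" using fin M_def by simp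
  obtain \<sigma>0 where s0: "\<sigma>0 \<in> partitions N" "f \<sigma>0 = M"
    using Max_in[OF fin] disc M_def by fastforce
  have "f ((\<lambda>x. {x}) ` N) = M"
  proof (rule reach_disc[OF fN s0(1), where P="\<lambda>\<sigma>. f \<sigma> = M"])
    show "f \<sigma>0 = M" by (rule s0(2))
  next
    fix \<sigma> assume sp: "\<sigma> \<in> partitions N" and fs: "f \<sigma> = M" and nd: "\<sigma> \<noteq> (\<lambda>x. {x}) ` N"
    have ps: "partition_on N \<sigma>" using sp by (simp add: partitions_def)
    obtain A where A: "A \<in> \<sigma>" "2 \<le> card A" using non_disc[OF ps fN nd] by blast
    then obtain i where i: "i \<in> A" by fastforce
    note st = split_step[OF ps fN A(1) i A(2)]
    define T where "T = A - {i}"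
    define \<tau> where "\<tau> = \<sigma> - {A}"
    have emb: "(T, \<tau>) \<in> embedded (N - {i})" and Tne: "T \<noteq> {}" and sig: "insert (T \<union> {i}) \<tau> = \<sigma>"
      using st T_def \<tau>_def by auto
    have iN: "i \<in> N" using i A ps partition_onD1 by blast
    have cp: "coef p N i T \<tau> = 0" using rp iN emb Tne by (simp add: rel_def)
    have ce: "coef ewens N i T \<tau> = 0" using re iN emb Tne by (simp add: rel_def)
    have tau: "partition_on (N - {i} - T) \<tau>" "T \<subseteq> N - {i}" using emb by (auto simp: embedded_def)
    have fT: "finite T" using tau(2) fN finite_subset by blast
    have fX: "finite (N - {i} - T)" using fN by simp
    have ftau: "finite (insert {} \<tau>)" using finite_elements[OF fX tau(1)] by simp
    have kpos: "real (card T) / real (card N - card T) > 0"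
    proof -
      have "card T > 0" using fT Tne by (simp add: card_gt_0_iff)
      moreover have "T \<subset> N" using tau(2) iN by blast
      then have "card T < card N" using psubset_card_mono[OF fN] by blast
      ultimately show ?thesis by simp
    qed
    define g where "g B = insert T (add_to \<tau> i B)" for B
    have gp: "g B \<in> partitions N" if "B \<in> insert {} \<tau>" for B
      using part_second[OF emb iN Tne that] by (simp add: g_def partitions_def)
    have "p N (g {}) = M * ewens N (g {})"
    proof (rule avg[OF kpos ftau insertI1, where p="\<lambda>B. p N (g B)" and e="\<lambda>B. ewens N (g B)"])
      show "\<forall>x\<in>insert {} \<tau>. p N (g x) \<le> M * ewens N (g x)"
        using gp Mge epos unfolding f_def by (simp add: pos_divide_le_eq)
      show "p N \<sigma> = real (card T) / real (card N - card T) * (\<Sum>B\<in>insert {} \<tau>. p N (g B))"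
        using cp sig unfolding coef_def g_def by simp
      show "ewens N \<sigma> = real (card T) / real (card N - card T) * (\<Sum>B\<in>insert {} \<tau>. ewens N (g B))"
        using ce sig unfolding coef_def g_def by simp
      show "p N \<sigma> = M * ewens N \<sigma>" using fs epos[of \<sigma>] unfolding f_def by (simp add: field_simps)
    qed
    then have "f (g {}) = M" unfolding f_def using epos[of "g {}"] by simp
    moreover have "card (g {}) = Suc (card \<sigma>)" using st(4) T_def \<tau>_def g_def by simp
    ultimately show "\<exists>\<sigma>'\<in>partitions N. card \<sigma>' = Suc (card \<sigma>) \<and> f \<sigma>' = M" using gp[of "{}"] by blast
  qed
  then show ?thesis using Mge unfolding f_def by simp
qed

lemma rel_neg: "rel p N \<Longrightarrow> rel (\<lambda>N \<sigma>. - p N \<sigma>) N"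
  unfolding rel_def coef_def by (simp add: sum_negf)

lemma rel_unique:
  assumes fN: "finite N" and rp: "rel p N" and sum1: "(\<Sum>\<sigma>\<in>partitions N. p N \<sigma>) = 1"
  shows "\<forall>\<sigma>\<in>partitions N. p N \<sigma> = ewens N \<sigma>"
proof -
  define d where "d = (\<lambda>x. {x}) ` N"
  define c where "c = p N d / ewens N d"
  have epos: "ewens N \<sigma> > 0" for \<sigma> by (simp add: ewens_W W_pos)
  have 1: "\<forall>\<sigma>\<in>partitions N. p N \<sigma> / ewens N \<sigma> \<le> c"
    using maxp[OF fN rp rel_ewens[OF fN]] unfolding c_def d_def .
  have 2: "\<forall>\<sigma>\<in>partitions N. - p N \<sigma> / ewens N \<sigma> \<le> - p N d / ewens N d"
    using maxp[OF fN rel_neg[OF rp] rel_ewens[OF fN]] unfolding d_def by simp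
  have eq: "\<forall>\<sigma>\<in>partitions N. p N \<sigma> = c * ewens N \<sigma>"
  proof
    fix \<sigma> assume s: "\<sigma> \<in> partitions N"
    have "p N \<sigma> / ewens N \<sigma> = c" using 1 2 s unfolding c_def by fastforce
    then show "p N \<sigma> = c * ewens N \<sigma>" using epos[of \<sigma>] by (simp add: field_simps)
  qed
  have "1 = (\<Sum>\<sigma>\<in>partitions N. c * ewens N \<sigma>)" using sum1 eq by simp
  also have "\<dots> = c" using sum_ewens[OF fN] by (simp add: sum_distrib_left[symmetric])
  finally show ?thesis using eq by simp
qed



lemma embedded_Sigma: "embedded X = (SIGMA T:Pow X. partitions (X - T))"
  by (auto simp: embedded_def partitions_def)

lemma W_insert_new:
  assumes "T \<notin> \<sigma>" "finite \<sigma>"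
  shows "W (insert T \<sigma>) = fact (card T - 1) * W \<sigma>"
  using assms by (simp add: W_def)

lemma ar2:
  fixes t n :: nat and w :: real
  assumes "0 < t" "t < n"
  shows "real t / real (n - t) * (fact (t - 1) * w / fact n)
       = fact t * fact (n - t - 1) / fact n * (w / fact (n - t))"
proof -
  have a: "(fact t :: real) = t * fact (t - 1)" using fact_reduce[of t] assms by simp
  have b: "(fact (n - t) :: real) = real (n - t) * fact (n - t - 1)" using fact_reduce[of "n - t", where 'a=real] assms by (simp only: zero_less_diff diff_diff_left)
  have c: "real (n - t) > 0" using assms by simp
  show ?thesis unfolding a b using c by (simp add: field_simps)
qed

lemma shp_ewens_mpw:
  assumes fN: "finite N" and iN: "i \<in> N" and tux: "tux_game N w"
  shows "p_shapley ewens N w i = mpw N w i"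
proof -
  define n where "n = card N"
  define c where "c T = fact (card T) * fact (n - card T - 1) / (fact n :: real)" for T :: "'a set"
  define v where "v S = (\<Sum>\<pi>\<in>partitions (N - S). ewens (N - S) \<pi> * w S \<pi>)" for S
  define f1 where "f1 T \<tau> = ewens N (insert (T \<union> {i}) \<tau>) * w (T \<union> {i}) \<tau>" for T \<tau>
  define f2 where "f2 T \<tau> = real (card T) / real (card N - card T) *
          (\<Sum>B\<in>insert {} \<tau>. ewens N (insert T (add_to \<tau> i B)) * w T (add_to \<tau> i B))" for T \<tau>
  have fP: "finite (Pow (N - {i}))" using fN by simp
  have "p_shapley ewens N w i = (\<Sum>(T, \<tau>)\<in>embedded (N - {i}). f1 T \<tau> - f2 T \<tau>)"
    unfolding p_shapley_def f1_def f2_def ..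
  also have "\<dots> = (\<Sum>T\<in>Pow (N - {i}). \<Sum>\<tau>\<in>partitions (N - {i} - T). f1 T \<tau> - f2 T \<tau>)"
    unfolding embedded_Sigma
    by (subst sum.Sigma[symmetric]) (auto simp: fP fN intro!: finite_partitions)
  also have "\<dots> = (\<Sum>T\<in>Pow (N - {i}). c T * (v (T \<union> {i}) - v T))"
  proof (rule sum.cong[OF refl])
    fix T assume T: "T \<in> Pow (N - {i})"
    have iT: "i \<notin> T" and TN: "T \<subseteq> N" using T by auto
    have fT: "finite T" using TN fN finite_subset by blast
    have "T \<subset> N" using TN iN iT by blast
    then have tn: "card T < n" unfolding n_def using psubset_card_mono[OF fN] by blast
    have eqN: "N - (T \<union> {i}) = N - {i} - T" by auto
    have cX: "card (N - {i} - T) = n - card T - 1"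
    proof -
      have "N - {i} - T = (N - T) - {i}" by blast
      moreover have "i \<in> N - T" using iN iT by blast
      ultimately have "card (N - {i} - T) = card (N - T) - 1" using card_Diff_singleton by metis
      also have "card (N - T) = n - card T" unfolding n_def using TN fN card_Diff_subset fT by blast
      finally show ?thesis by simp
    qed
    have A: "(\<Sum>\<tau>\<in>partitions (N - {i} - T). f1 T \<tau>) = c T * v (T \<union> {i})"
      unfolding v_def eqN sum_distrib_left
    proof (rule sum.cong[OF refl])
      fix \<tau> assume "\<tau> \<in> partitions (N - {i} - T)"
      then have tau: "partition_on (N - {i} - T) \<tau>" by (simp add: partitions_def)
      have n1: "T \<union> {i} \<notin> \<tau>" using partition_onD1[OF tau] by auto
      have ft: "finite \<tau>" using finite_elements[OF _ tau] fN by simp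
      have "W (insert (T \<union> {i}) \<tau>) = fact (card T) * W \<tau>"
        using W_insert_new[OF n1 ft] fT iT by simp
      then show "f1 T \<tau> = c T * (ewens (N - {i} - T) \<tau> * w (T \<union> {i}) \<tau>)"
        unfolding f1_def c_def ewens_W cX n_def by simp
    qed
    have B: "(\<Sum>\<tau>\<in>partitions (N - {i} - T). f2 T \<tau>) = c T * v T"
    proof (cases "T = {}")
      case True
      have "v T = 0" unfolding v_def using tux True by (auto simp: tux_game_def partitions_def intro!: sum.neutral)
      then show ?thesis unfolding f2_def using True by simp
    next
      case False
      have tpos: "card T > 0" using fT False by (simp add: card_gt_0_iff)
      define k where "k = real (card T) / real (card N - card T)"
      define g where "g \<sigma> = ewens N (insert T \<sigma>) * w T \<sigma>" for \<sigma>
      have iX: "i \<notin> N - {i} - T" by simp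
      have ins: "insert i (N - {i} - T) = N - T" using iN iT by auto
      have "(\<Sum>\<tau>\<in>partitions (N - {i} - T). f2 T \<tau>)
          = k * (\<Sum>\<tau>\<in>partitions (N - {i} - T). \<Sum>B\<in>insert {} \<tau>. g (add_to \<tau> i B))"
        unfolding f2_def k_def g_def by (simp add: sum_distrib_left)
      also have "(\<Sum>\<tau>\<in>partitions (N - {i} - T). \<Sum>B\<in>insert {} \<tau>. g (add_to \<tau> i B))
          = (\<Sum>z\<in>(SIGMA \<tau>:partitions (N - {i} - T). insert {} \<tau>). g ((\<lambda>(\<pi>, B). add_to \<pi> i B) z))"
      proof (subst sum.Sigma)
        have fX: "finite (N - {i} - T)" using fN by simp
        show "finite (partitions (N - {i} - T))" using finite_partitions[OF fX] .
        show "\<forall>\<tau>\<in>partitions (N - {i} - T). finite (insert {} \<tau>)"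
          using finite_elements[OF fX] by (simp add: partitions_def)
      qed (simp add: split_beta)
      also have "\<dots> = (\<Sum>\<sigma>\<in>partitions (N - T). g \<sigma>)"
        using sum.reindex_bij_betw[OF add_to_bij[OF iX], of g] unfolding ins .
      finally have e1: "(\<Sum>\<tau>\<in>partitions (N - {i} - T). f2 T \<tau>) = k * (\<Sum>\<sigma>\<in>partitions (N - T). g \<sigma>)" .
      have "k * (\<Sum>\<sigma>\<in>partitions (N - T). g \<sigma>) = c T * v T"
        unfolding v_def sum_distrib_left
      proof (rule sum.cong[OF refl])
        fix \<sigma> assume "\<sigma> \<in> partitions (N - T)"
        then have sg: "partition_on (N - T) \<sigma>" by (simp add: partitions_def)
        have n1: "T \<notin> \<sigma>" using partition_onD1[OF sg] False by auto
        have ft: "finite \<sigma>" using finite_elements[OF _ sg] fN by simp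
        have cNT: "card (N - T) = n - card T" unfolding n_def using TN fN card_Diff_subset fT by blast
        have "k * ewens N (insert T \<sigma>) = c T * ewens (N - T) \<sigma>"
          unfolding k_def c_def ewens_W W_insert_new[OF n1 ft] cNT n_def[symmetric]
          using ar2[OF tpos tn, of "W \<sigma>"] by simp
        then show "k * g \<sigma> = c T * (ewens (N - T) \<sigma> * w T \<sigma>)" unfolding g_def by simp
      qed
      then show ?thesis using e1 by simp
    qed
    show "(\<Sum>\<tau>\<in>partitions (N - {i} - T). f1 T \<tau> - f2 T \<tau>) = c T * (v (T \<union> {i}) - v T)"
      using A B by (simp add: sum_subtractf right_diff_distrib)
  qed
  also have "\<dots> = mpw N w i"
    unfolding mpw_def shapley_def c_def v_def n_def by (simp add: algebra_simps)
  finally show ?thesis .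
qed



theorem proposition2:
  fixes U :: "'a set" and p :: "'a set \<Rightarrow> 'a set set \<Rightarrow> real"
  assumes "finite U"
    and "random_partition U p"
  shows "(null_player_property U (p_shapley p) \<longleftrightarrow>
            (\<forall>N \<subseteq> U. \<forall>\<pi>\<in>partitions N. p N \<pi> = ewens N \<pi>))
       \<and> ((\<forall>N \<subseteq> U. \<forall>\<pi>\<in>partitions N. p N \<pi> = ewens N \<pi>) \<longleftrightarrow>
            (\<forall>N w i. N \<subseteq> U \<and> tux_game N w \<and> i \<in> N \<longrightarrow> p_shapley p N w i = mpw N w i))"
proof -
  let ?E = "\<forall>N \<subseteq> U. \<forall>\<pi>\<in>partitions N. p N \<pi> = ewens N \<pi>"
  have L1: "?E" if npp: "null_player_property U (p_shapley p)"
  proof (intro allI impI)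
    fix N assume NU: "N \<subseteq> U"
    have fN: "finite N" using NU assms(1) finite_subset by blast
    have r: "rel p N" unfolding rel_def
    proof (intro ballI allI impI)
      fix i T \<tau> assume "i \<in> N" "(T, \<tau>) \<in> embedded (N - {i})" "T \<noteq> {}"
      then show "coef p N i T \<tau> = 0" by (rule npp_coef[OF npp NU fN])
    qed
    have s: "(\<Sum>\<sigma>\<in>partitions N. p N \<sigma>) = 1" using assms(2) NU unfolding random_partition_def by simp
    show "\<forall>\<pi>\<in>partitions N. p N \<pi> = ewens N \<pi>" by (rule rel_unique[OF fN r s])
  qed
  have L2: "null_player_property U (p_shapley p)" if E: ?E
    unfolding null_player_property_def
  proof (intro allI impI)
    fix N w i assume h: "N \<subseteq> U \<and> tux_game N w \<and> i \<in> N \<and> null_player N w i"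
    have "p_shapley p N w i = p_shapley ewens N w i" using shp_cong[of i N p ewens] h E by simp
    also have "\<dots> = 0" using npp_ewens[OF assms(1)] h unfolding null_player_property_def by blast
    finally show "p_shapley p N w i = 0" .
  qed
  have L3: "p_shapley p N w i = mpw N w i" if E: ?E and h: "N \<subseteq> U \<and> tux_game N w \<and> i \<in> N" for N w i
  proof -
    have fN: "finite N" using h assms(1) finite_subset by blast
    have "p_shapley p N w i = p_shapley ewens N w i" using shp_cong[of i N p ewens] h E by simp
    also have "\<dots> = mpw N w i" using shp_ewens_mpw[OF fN] h by blast
    finally show ?thesis .
  qed
  have L4: ?E if M: "\<forall>N w i. N \<subseteq> U \<and> tux_game N w \<and> i \<in> N \<longrightarrow> p_shapley p N w i = mpw N w i"
  proof (rule L1)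
    show "null_player_property U (p_shapley p)"
      unfolding null_player_property_def
    proof (intro allI impI)
      fix N w i assume h: "N \<subseteq> U \<and> tux_game N w \<and> i \<in> N \<and> null_player N w i"
      have fN: "finite N" using h assms(1) finite_subset by blast
      have "p_shapley p N w i = mpw N w i" using M h by blast
      also have "\<dots> = p_shapley ewens N w i" using shp_ewens_mpw[OF fN] h by simp
      also have "\<dots> = 0" using npp_ewens[OF assms(1)] h unfolding null_player_property_def by blast
      finally show "p_shapley p N w i = 0" .
    qed
  qed
  show ?thesis
  proof (intro conjI iffI)
    show ?E if "null_player_property U (p_shapley p)" using L1 that .
    show "null_player_property U (p_shapley p)" if ?E using L2 that .
    show "\<forall>N w i. N \<subseteq> U \<and> tux_game N w \<and> i \<in> N \<longrightarrow> p_shapley p N w i = mpw N w i" if ?E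
      using L3[OF that] by blast
    show ?E if "\<forall>N w i. N \<subseteq> U \<and> tux_game N w \<and> i \<in> N \<longrightarrow> p_shapley p N w i = mpw N w i"
      using L4 that .
  qed
qed


end
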